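(* Let $A=\sigma(R)\langle x_1,\dots,x_n\rangle$ be a quasi-commutative bijective $\sigma$-PBW extension of a left Noetherian ring $R$. Let $c_1,\dots,c_t\in R\setminus\{0\}$ and let $\mathbf X_1,\dots,\mathbf X_t$ be monomials of $A^m$. Let $L=[c_1\mathbf X_1\ \cdots\ c_t\mathbf X_t]$ and $$\mathrm{Syz}(L)=\{(h_1,\dots,h_t)^T\in A^t:\sum_jh_jc_j\mathbf X_j=\mathbf 0\}.$$ Put $\beta_j=\exp(\mathbf X_j)$. For each nonempty $J\subseteq\{1,\dots,t\}$ that is saturated with respect to $\{\mathbf X_1,\dots,\mathbf X_t\}$ and satisfies $\mathbf X_J\neq\mathbf 0$: - let $\gamma_j\in\mathbb N^n$ ($j\in J$) be defined by $\gamma_j+\beta_j=\exp(\mathbf X_J)$; - let $B^J=\{\mathbf b^J_1,\dots,\mathbf b^J_{r_J}\}$, with $\mathbf b^J_v=(b^J_{vj})_{j\in J}$, be a finite generating set of the left $R$-module $$\mathrm{Syz}_R[\sigma^{\gamma_j}(c_j)c_{\gamma_j,\beta_j}\mid j\in J]=\Big\{(b_j)_{j\in J}\in R^J:\sum_{j\in J}b_j\sigma^{\gamma_j}(c_j)c_{\gamma_j,\beta_j}=0\Big\};$$ - put $\mathbf s^J_v=\sum_{j\in J}b^J_{vj}x^{\gamma_j}\tilde{\mathbf e}_j\in A^t$, where $\tilde{\mathbf e}_1,\dots,\tilde{\mathbf e}_t$ is the canonical basis of $A^t$. Then each $\mathbf s^J_v$ is a homogeneous syzygy of $\mathrm{Syz}(L)$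 of degree $\mathbf X_J$. Moreover, the set of all such $\mathbf s^J_v$ (over all such saturated $J$ and $1\le v\le r_J$) generates $\mathrm{Syz}(L)$ as a left $A$-module.
   Context: Let $R\subseteq A$ be rings. $A$ is a $\sigma$-PBW extension of $R$, written $A=\sigma(R)\langle x_1,\dots,x_n\rangle$, if there are $x_1,\dots,x_n\in A\setminus R$ such that: (i) $A$ is a free left $R$-module with basis $\mathrm{Mon}(A)=\{x^\alpha=x_1^{\alpha_1}\cdots x_n^{\alpha_n}:\alpha\in\mathbb N^n\}$, with $x^0=1$; (ii) for every $i$ and every $r\in R\setminus\{0\}$ there is $c_{i,r}\in R\setminus\{0\}$ with $x_ir-c_{i,r}x_i\in R$; (iii) for all $i,j$ there is $c_{i,j}\in R\setminus\{0\}$ with $x_jx_i-c_{i,j}x_ix_j\in R+Rx_1+\dots+Rx_n$. There are injective ring endomorphisms $\sigma_i$ of $R$ with $x_ir=\sigma_i(r)x_i+\delta_i(r)$, where $\delta_i$ are $\sigma_i$-derivations. Write $\sigma^\alpha=\sigma_1^{\alpha_1}\circ\cdots\circ\sigma_n^{\alpha_n}$. For $\alpha,\beta$ there are unique $c_{\alpha,\beta}\in R$ and $p_{\alpha,\beta}\in A$ with $x^\alpha x^\beta=c_{\alpha,\beta}x^{\alpha+\beta}+p_{\alpha,\beta}$, where $p_{\alpha,\beta}=0$ or $\deg p_{\alpha,\beta}<|\alpha+\beta|$. $A$ is quasi-commutative if $x_ir=c_{i,r}x_i$ and $x_jx_i=c_{i,j}x_ix_j$ exactly (then $p_{\alpha,\beta}=0$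 and $x^\alpha r=\sigma^\alpha(r)x^\alpha$). $A$ is bijective if each $\sigma_i$ is bijective and $c_{i,j}$ is invertible for $i<j$ (then all $c_{\alpha,\beta}$ are invertible). $\mathrm{Mon}(A)$ carries a monomial order (a total order compatible with multiplication via leading monomials, with $x^\alpha\succeq1$, degree compatible); $lm$ denotes leading monomial, $lm(x^\alpha x^\beta)=x^{\alpha+\beta}$. Monomials of $A^m$ are $x^\alpha\mathbf e_i$, with $\exp(x^\alpha\mathbf e_i)=\alpha$. The monomial $x^\alpha\mathbf e_i$ divides $x^\beta\mathbf e_j$ iff $i=j$ and $\beta_k\ge\alpha_k$ for all $k$. For $J\subseteq\{1,\dots,t\}$, $\mathbf X_J=\mathrm{lcm}\{\mathbf X_j:j\in J\}$, where the lcm of $x^\alpha\mathbf e_i$ and $x^\beta\mathbf e_j$ is $\mathbf 0$ if $i\neq j$, and $x^\gamma\mathbf e_i$ with $\gamma_k=\max(\alpha_k,\beta_k)$ if $i=j$. $J$ is saturated w.r.t. $\{\mathbf X_1,\dots,\mathbf X_t\}$ if for every $j\in\{1,\dots,t\}$, $\mathbf X_j\mid\mathbf X_J$ implies $j\in J$. A term of $A$ is $cx^\alpha$ with $c\in R$. A syzygy $\mathbf h=(h_1,\dots,h_t)^T\in\mathrm{Syz}(L)$ is homogeneous of degree $\mathbf X=X\mathbf e_i$ if each $h_j$ is a term and, for each $j$, either $h_j=0$ or $lm(lm(h_j)\mathbf X_j)=\mathbf X$. *)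

theory Defs
  imports Main
begin

(* The ring A is the whole type 'a; R is a subset of it.  Variables x_1..x_n are
   x 0 .. x (n-1); exponent vectors are nat => nat vanishing at indices >= n. *)

definition expv :: "nat \<Rightarrow> (nat \<Rightarrow> nat) set" where
  "expv n = {\<alpha>. \<forall>k\<ge>n. \<alpha> k = 0}"

definition mon :: "(nat \<Rightarrow> 'a::ring_1) \<Rightarrow> nat \<Rightarrow> (nat \<Rightarrow> nat) \<Rightarrow> 'a" where
  "mon x n \<alpha> = prod_list (map (\<lambda>i. x i ^ \<alpha> i) [0..<n])"

definition is_repr :: "'a::ring_1 set \<Rightarrow> (nat \<Rightarrow> 'a) \<Rightarrow> nat \<Rightarrow> ((nat \<Rightarrow> nat) \<Rightarrow> 'a) \<Rightarrow> 'a \<Rightarrow> bool" where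
  "is_repr R x n f a \<longleftrightarrow> (\<forall>\<alpha>. f \<alpha> \<in> R) \<and> finite {\<alpha>. f \<alpha> \<noteq> 0} \<and> {\<alpha>. f \<alpha> \<noteq> 0} \<subseteq> expv n
     \<and> a = (\<Sum>\<alpha>\<in>{\<alpha>. f \<alpha> \<noteq> 0}. f \<alpha> * mon x n \<alpha>)"

definition coord :: "'a::ring_1 set \<Rightarrow> (nat \<Rightarrow> 'a) \<Rightarrow> nat \<Rightarrow> 'a \<Rightarrow> (nat \<Rightarrow> nat) \<Rightarrow> 'a" where
  "coord R x n a = (THE f. is_repr R x n f a)"

definition subring :: "'a::ring_1 set \<Rightarrow> bool" where
  "subring R \<longleftrightarrow> 0 \<in> R \<and> 1 \<in> R \<and> (\<forall>a\<in>R. \<forall>b\<in>R. a + b \<in> R \<and> - a \<in> R \<and> a * b \<in> R)"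

definition left_ideal :: "'a::ring_1 set \<Rightarrow> 'a set \<Rightarrow> bool" where
  "left_ideal R I \<longleftrightarrow> I \<subseteq> R \<and> 0 \<in> I \<and> (\<forall>a\<in>I. \<forall>b\<in>I. a + b \<in> I) \<and> (\<forall>r\<in>R. \<forall>a\<in>I. r * a \<in> I)"

definition lspan :: "'a::ring_1 set \<Rightarrow> 'a set \<Rightarrow> 'a set" where
  "lspan K S = {a. \<exists>F c. finite F \<and> F \<subseteq> S \<and> (\<forall>s\<in>F. c s \<in> K) \<and> a = (\<Sum>s\<in>F. c s * s)}"

definition left_noetherian :: "'a::ring_1 set \<Rightarrow> bool" where
  "left_noetherian R \<longleftrightarrow> (\<forall>I. left_ideal R I \<longrightarrow> (\<exists>F. finite F \<and> F \<subseteq> I \<and> I = lspan R F))"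

definition sigma_PBW :: "'a::ring_1 set \<Rightarrow> (nat \<Rightarrow> 'a) \<Rightarrow> nat \<Rightarrow> bool" where
  "sigma_PBW R x n \<longleftrightarrow> subring R \<and> (\<forall>i<n. x i \<notin> R)
     \<and> (\<forall>a. \<exists>!f. is_repr R x n f a)
     \<and> (\<forall>i<n. \<forall>r\<in>R - {0}. \<exists>c\<in>R - {0}. x i * r - c * x i \<in> R)
     \<and> (\<forall>i<n. \<forall>j<n. \<exists>c\<in>R - {0}. \<exists>d\<in>R. \<exists>e. (\<forall>k. e k \<in> R)
           \<and> x j * x i - c * x i * x j = d + (\<Sum>k<n. e k * x k))"

definition quasi_commutative :: "'a::ring_1 set \<Rightarrow> (nat \<Rightarrow> 'a) \<Rightarrow> nat \<Rightarrow> bool" where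
  "quasi_commutative R x n \<longleftrightarrow>
     (\<forall>i<n. \<forall>r\<in>R - {0}. \<exists>c\<in>R - {0}. x i * r = c * x i)
     \<and> (\<forall>i<n. \<forall>j<n. \<exists>c\<in>R - {0}. x j * x i = c * x i * x j)"

definition ei :: "nat \<Rightarrow> nat \<Rightarrow> nat" where
  "ei i = (\<lambda>k. if k = i then 1 else 0)"

(* sigma_i(r) = coefficient of x_i in x_i r  (since x_i r = sigma_i(r) x_i + delta_i(r)) *)
definition sig :: "'a::ring_1 set \<Rightarrow> (nat \<Rightarrow> 'a) \<Rightarrow> nat \<Rightarrow> nat \<Rightarrow> 'a \<Rightarrow> 'a" where
  "sig R x n i r = coord R x n (x i * r) (ei i)"

(* sigma^alpha = sigma_1^alpha_1 o ... o sigma_n^alpha_n *)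
definition sig_pow :: "'a::ring_1 set \<Rightarrow> (nat \<Rightarrow> 'a) \<Rightarrow> nat \<Rightarrow> (nat \<Rightarrow> nat) \<Rightarrow> 'a \<Rightarrow> 'a" where
  "sig_pow R x n \<gamma> = fold (\<lambda>i f. f \<circ> (sig R x n i ^^ \<gamma> i)) [0..<n] id"

definition cpair :: "'a::ring_1 set \<Rightarrow> (nat \<Rightarrow> 'a) \<Rightarrow> nat \<Rightarrow> (nat \<Rightarrow> nat) \<Rightarrow> (nat \<Rightarrow> nat) \<Rightarrow> 'a" where
  "cpair R x n \<alpha> \<beta> = coord R x n (mon x n \<alpha> * mon x n \<beta>) (\<lambda>k. \<alpha> k + \<beta> k)"

(* bijective: each sigma_i bijective on R, c_{i,j} invertible in R for i<j;
   c_{i,j} is the coefficient of x_i x_j = x^(e_i+e_j) in x_j x_i *)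
definition bijective_ext :: "'a::ring_1 set \<Rightarrow> (nat \<Rightarrow> 'a) \<Rightarrow> nat \<Rightarrow> bool" where
  "bijective_ext R x n \<longleftrightarrow> (\<forall>i<n. bij_betw (sig R x n i) R R)
     \<and> (\<forall>i j. i < j \<and> j < n \<longrightarrow>
          (\<exists>u\<in>R. u * coord R x n (x j * x i) (\<lambda>k. ei i k + ei j k) = 1
                 \<and> coord R x n (x j * x i) (\<lambda>k. ei i k + ei j k) * u = 1))"

(* Monomials of A^m are pairs (i, alpha) standing for x^alpha e_i.
   The module L = [c_1 X_1 ... c_t X_t] with X_j = x^(beta j) e_(iota j), j < t. *)
definition syzL :: "(nat \<Rightarrow> 'a::ring_1) \<Rightarrow> nat \<Rightarrow> nat \<Rightarrow> nat \<Rightarrow> (nat \<Rightarrow> 'a) \<Rightarrow> (nat \<Rightarrow> nat)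
                    \<Rightarrow> (nat \<Rightarrow> nat \<Rightarrow> nat) \<Rightarrow> (nat \<Rightarrow> 'a) set" where
  "syzL x n m t c \<iota> \<beta> = {h. (\<forall>j\<ge>t. h j = 0) \<and>
      (\<forall>k<m. (\<Sum>j<t. if \<iota> j = k then h j * (c j * mon x n (\<beta> j)) else 0) = 0)}"

(* X_J = lcm of X_j, j in J; None encodes the zero vector *)
definition XJ :: "(nat \<Rightarrow> nat) \<Rightarrow> (nat \<Rightarrow> nat \<Rightarrow> nat) \<Rightarrow> nat set \<Rightarrow> (nat \<times> (nat \<Rightarrow> nat)) option" where
  "XJ \<iota> \<beta> J = (if J \<noteq> {} \<and> (\<forall>j\<in>J. \<forall>j'\<in>J. \<iota> j = \<iota> j')
       then Some (\<iota> (SOME j. j \<in> J), \<lambda>k. Max ((\<lambda>j. \<beta> j k) ` J)) else None)"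

definition mdvd :: "nat \<times> (nat \<Rightarrow> nat) \<Rightarrow> nat \<times> (nat \<Rightarrow> nat) \<Rightarrow> bool" where
  "mdvd X Y \<longleftrightarrow> fst X = fst Y \<and> (\<forall>l. snd X l \<le> snd Y l)"

definition saturated :: "nat \<Rightarrow> (nat \<Rightarrow> nat) \<Rightarrow> (nat \<Rightarrow> nat \<Rightarrow> nat) \<Rightarrow> nat set \<Rightarrow> bool" where
  "saturated t \<iota> \<beta> J \<longleftrightarrow> (\<forall>j<t. \<forall>X. XJ \<iota> \<beta> J = Some X \<longrightarrow> mdvd (\<iota> j, \<beta> j) X \<longrightarrow> j \<in> J)"

definition gam :: "(nat \<Rightarrow> nat \<Rightarrow> nat) \<Rightarrow> (nat \<Rightarrow> nat) \<Rightarrow> nat \<Rightarrow> nat \<Rightarrow> nat" where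
  "gam \<beta> \<delta> j = (\<lambda>k. \<delta> k - \<beta> j k)"

definition syzR :: "'a::ring_1 set \<Rightarrow> (nat \<Rightarrow> 'a) \<Rightarrow> nat \<Rightarrow> (nat \<Rightarrow> 'a) \<Rightarrow> (nat \<Rightarrow> nat \<Rightarrow> nat)
                    \<Rightarrow> (nat \<Rightarrow> nat) \<Rightarrow> nat set \<Rightarrow> (nat \<Rightarrow> 'a) set" where
  "syzR R x n c \<beta> \<delta> J = {b. (\<forall>j\<in>J. b j \<in> R) \<and> (\<forall>j. j \<notin> J \<longrightarrow> b j = 0) \<and>
      (\<Sum>j\<in>J. b j * (sig_pow R x n (gam \<beta> \<delta> j) (c j) * cpair R x n (gam \<beta> \<delta> j) (\<beta> j))) = 0}"

definition vspan :: "'a::ring_1 set \<Rightarrow> (nat \<Rightarrow> 'a) set \<Rightarrow> (nat \<Rightarrow> 'a) set" where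
  "vspan K S = {v. \<exists>F a. finite F \<and> F \<subseteq> S \<and> (\<forall>s\<in>F. a s \<in> K) \<and> v = (\<lambda>j. \<Sum>s\<in>F. a s * s j)}"

definition sJ :: "(nat \<Rightarrow> 'a::ring_1) \<Rightarrow> nat \<Rightarrow> (nat \<Rightarrow> nat \<Rightarrow> nat) \<Rightarrow> (nat \<Rightarrow> nat) \<Rightarrow> nat set
                  \<Rightarrow> (nat \<Rightarrow> 'a) \<Rightarrow> nat \<Rightarrow> 'a" where
  "sJ x n \<beta> \<delta> J b = (\<lambda>j. if j \<in> J then b j * mon x n (gam \<beta> \<delta> j) else 0)"

(* homogeneous of degree X = x^delta e_i: each h_j is a term c x^alpha, and if h_j <> 0
   then lm(lm(h_j) X_j) = x^(alpha + beta_j) e_(iota j) equals X *)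
definition homog :: "'a::ring_1 set \<Rightarrow> (nat \<Rightarrow> 'a) \<Rightarrow> nat \<Rightarrow> nat \<Rightarrow> (nat \<Rightarrow> nat) \<Rightarrow> (nat \<Rightarrow> nat \<Rightarrow> nat)
                     \<Rightarrow> (nat \<Rightarrow> 'a) \<Rightarrow> nat \<times> (nat \<Rightarrow> nat) \<Rightarrow> bool" where
  "homog R x n t \<iota> \<beta> h X \<longleftrightarrow> (\<forall>j<t. \<exists>d \<alpha>. d \<in> R \<and> \<alpha> \<in> expv n \<and> h j = d * mon x n \<alpha> \<and>
       (h j = 0 \<or> (\<iota> j = fst X \<and> (\<lambda>k. \<alpha> k + \<beta> j k) = snd X)))"

end

theory Submission
  imports Defs
begin

definition unitR :: "'a::ring_1 set \<Rightarrow> 'a \<Rightarrow> bool" where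
  "unitR R u \<longleftrightarrow> u \<in> R \<and> (\<exists>v\<in>R. u * v = 1 \<and> v * u = 1)"

abbreviation PL :: "(nat \<Rightarrow> 'a::ring_1) \<Rightarrow> nat list \<Rightarrow> (nat \<Rightarrow> nat) \<Rightarrow> 'a" where
  "PL x ks \<alpha> \<equiv> prod_list (map (\<lambda>i. x i ^ \<alpha> i) ks)"

lemma PL_ones: "\<forall>k\<in>set ks. \<alpha> k = 0 \<Longrightarrow> PL x ks \<alpha> = 1"
  by (induction ks) auto

lemma PL_cong: "\<forall>k\<in>set ks. \<alpha> k = \<alpha>' k \<Longrightarrow> PL x ks \<alpha> = PL x ks \<alpha>'"
  by (induction ks) auto

lemma upt_split3: "i < n \<Longrightarrow> [0..<n] = [0..<i] @ i # [Suc i..<n]"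
  proof -
  assume "i < n"
  then have "[0..<n] = [0..<i] @ [i..<n]" using upt_add_eq_append[of 0 i "n-i"] by simp
  then show ?thesis using \<open>i<n\<close> upt_conv_Cons by simp
qed

lemma mon_cong: "(\<forall>k<n. \<alpha> k = \<alpha>' k) \<Longrightarrow> mon x n \<alpha> = mon x n \<alpha>'"
  unfolding mon_def by (rule PL_cong) auto

lemma mon_split: "i < n \<Longrightarrow> mon x n \<alpha> = PL x [0..<i] \<alpha> * (x i ^ \<alpha> i * PL x [Suc i..<n] \<alpha>)"
  unfolding mon_def by (subst upt_split3[of i n]) auto

lemma mon_ei: "i < n \<Longrightarrow> mon x n (ei i) = x i"
  by (subst mon_split[of i]) (auto simp: ei_def PL_ones)

lemma mon_eij: "k < i \<Longrightarrow> i < n \<Longrightarrow> mon x n (\<lambda>l. ei k l + ei i l) = x k * x i"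
proof -
  assume a: "k < i" "i < n"
  have "mon x n (\<lambda>l. ei k l + ei i l) = PL x [0..<i] (\<lambda>l. ei k l + ei i l) * x i"
    using a by (subst mon_split[of i]) (auto simp: ei_def PL_ones)
  also have "PL x [0..<i] (\<lambda>l. ei k l + ei i l) = PL x [0..<i] (ei k)"
    by (rule PL_cong) (auto simp: ei_def)
  also have "\<dots> = mon x i (ei k)" by (simp add: mon_def)
  also have "\<dots> = x k" using a by (simp add: mon_ei)
  finally show ?thesis .
qed

lemma mon_zero: "mon x n (\<lambda>_. 0) = 1"
  unfolding mon_def by (rule PL_ones) simp

lemma ei_expv: "i < n \<Longrightarrow> ei i \<in> expv n" by (auto simp: expv_def ei_def)



locale qpbw =
  fixes R :: "'a::ring_1 set" and x :: "nat \<Rightarrow> 'a" and n :: nat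
  assumes pbw: "sigma_PBW R x n" and qc: "quasi_commutative R x n" and bj: "bijective_ext R x n"
begin

lemma subR: "subring R" using pbw by (simp add: sigma_PBW_def)
lemma R0[simp]: "0 \<in> R" using subR by (simp add: subring_def)
lemma R1[simp]: "1 \<in> R" using subR by (simp add: subring_def)
lemma Radd: "a \<in> R \<Longrightarrow> b \<in> R \<Longrightarrow> a + b \<in> R" using subR by (simp add: subring_def)
lemma Rneg: "a \<in> R \<Longrightarrow> - a \<in> R" using subR by (simp add: subring_def)
lemma Rmul: "a \<in> R \<Longrightarrow> b \<in> R \<Longrightarrow> a * b \<in> R" using subR by (simp add: subring_def)
lemma Rsum: "finite S \<Longrightarrow> (\<forall>s\<in>S. f s \<in> R) \<Longrightarrow> sum f S \<in> R"
  by (induction S rule: finite_induct) (auto intro: Radd)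

lemma ex1_repr: "\<exists>!f. is_repr R x n f a" using pbw by (simp add: sigma_PBW_def)

lemma coord_repr: "is_repr R x n (coord R x n a) a"
  unfolding coord_def using ex1_repr by (rule theI')

lemma coord_eq: "is_repr R x n f a \<Longrightarrow> coord R x n a = f"
  unfolding coord_def using ex1_repr by (rule the1_equality)

lemma coord_R: "coord R x n a \<alpha> \<in> R"
  using coord_repr by (simp add: is_repr_def)

lemma coord_sum:
  assumes "finite D" "D \<subseteq> expv n" "\<forall>\<delta>\<in>D. s \<delta> \<in> R"
  shows "coord R x n (\<Sum>\<delta>\<in>D. s \<delta> * mon x n \<delta>) = (\<lambda>\<delta>. if \<delta> \<in> D then s \<delta> else 0)"
proof (rule coord_eq)
  let ?f = "\<lambda>\<delta>. if \<delta> \<in> D then s \<delta> else 0"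
  have sub: "{\<alpha>. ?f \<alpha> \<noteq> 0} \<subseteq> D" by auto
  have "(\<Sum>\<alpha>\<in>{\<alpha>. ?f \<alpha> \<noteq> 0}. ?f \<alpha> * mon x n \<alpha>) = (\<Sum>\<delta>\<in>D. ?f \<delta> * mon x n \<delta>)"
    by (rule sum.mono_neutral_left) (use assms sub in auto)
  also have "\<dots> = (\<Sum>\<delta>\<in>D. s \<delta> * mon x n \<delta>)" by (rule sum.cong) auto
  finally show "is_repr R x n ?f (\<Sum>\<delta>\<in>D. s \<delta> * mon x n \<delta>)"
    unfolding is_repr_def using assms sub finite_subset[OF sub] by auto
qed

lemma coord_zero: "coord R x n 0 = (\<lambda>_. 0)"
  using coord_sum[of "{}" s] by simp

lemma coeffs_zero:
  assumes "finite D" "D \<subseteq> expv n" "\<forall>\<delta>\<in>D. s \<delta> \<in> R" "(\<Sum>\<delta>\<in>D. s \<delta> * mon x n \<delta>) = 0" "\<delta> \<in> D"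
  shows "s \<delta> = 0"
proof -
  have "coord R x n (\<Sum>\<delta>\<in>D. s \<delta> * mon x n \<delta>) \<delta> = s \<delta>" using coord_sum[OF assms(1-3)] assms(5) by simp
  then show ?thesis using assms(4) coord_zero by simp
qed

lemma coord_term: "\<alpha> \<in> expv n \<Longrightarrow> r \<in> R \<Longrightarrow> coord R x n (r * mon x n \<alpha>) \<alpha> = r"
  using coord_sum[of "{\<alpha>}" "\<lambda>_. r"] by simp

lemma term_cancel: "\<alpha> \<in> expv n \<Longrightarrow> r \<in> R \<Longrightarrow> r' \<in> R \<Longrightarrow> r * mon x n \<alpha> = r' * mon x n \<alpha> \<Longrightarrow> r = r'"
proof -
  assume a: "\<alpha> \<in> expv n" "r \<in> R" "r' \<in> R" "r * mon x n \<alpha> = r' * mon x n \<alpha>"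
  have "r = coord R x n (r * mon x n \<alpha>) \<alpha>" using coord_term[OF a(1,2)] by simp
  also have "\<dots> = coord R x n (r' * mon x n \<alpha>) \<alpha>" by (simp only: a(4))
  also have "\<dots> = r'" using coord_term[OF a(1,3)] .
  finally show ?thesis .
qed

lemma x_R: assumes "i < n" "r \<in> R" shows "sig R x n i r \<in> R \<and> x i * r = sig R x n i r * x i"
proof (cases "r = 0")
  case True
  then show ?thesis by (simp add: sig_def coord_zero)
next
  case False
  then obtain c where c: "c \<in> R" "x i * r = c * x i"
    using qc assms unfolding quasi_commutative_def by blast
  have "sig R x n i r = c" unfolding sig_def c(2)
    using coord_term[OF ei_expv[OF assms(1)] c(1)] mon_ei[OF assms(1), of x] by simp
  then show ?thesis using c by simp
qed

lemma sig_R: "i < n \<Longrightarrow> r \<in> R \<Longrightarrow> sig R x n i r \<in> R" using x_R by blast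
lemma x_comm: "i < n \<Longrightarrow> r \<in> R \<Longrightarrow> x i * r = sig R x n i r * x i" using x_R by blast

lemma x_cancel: "i < n \<Longrightarrow> a \<in> R \<Longrightarrow> b \<in> R \<Longrightarrow> a * x i = b * x i \<Longrightarrow> a = b"
  using term_cancel[OF ei_expv, of i a b] mon_ei[of i n x] by simp

lemma sig_mult: assumes "i < n" "a \<in> R" "b \<in> R"
  shows "sig R x n i (a * b) = sig R x n i a * sig R x n i b"
proof -
  have ab: "a * b \<in> R" using assms Rmul by blast
  have "sig R x n i (a * b) * x i = x i * (a * b)" using x_comm[OF assms(1) ab] by simp
  also have "\<dots> = (x i * a) * b" by (simp add: mult.assoc)
  also have "\<dots> = sig R x n i a * (x i * b)" using x_comm[OF assms(1,2)] by (simp add: mult.assoc)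
  also have "\<dots> = (sig R x n i a * sig R x n i b) * x i" using x_comm[OF assms(1,3)] by (simp add: mult.assoc)
  finally have "sig R x n i (a * b) * x i = (sig R x n i a * sig R x n i b) * x i" .
  moreover have "sig R x n i (a * b) \<in> R" using sig_R[OF assms(1) ab] .
  moreover have "sig R x n i a * sig R x n i b \<in> R" using sig_R assms Rmul by blast
  ultimately show ?thesis using x_cancel[OF assms(1)] by blast
qed

lemma sig_one: assumes "i < n" shows "sig R x n i 1 = 1"
proof -
  have "sig R x n i 1 * x i = 1 * x i" using x_comm[OF assms R1] by simp
  then show ?thesis using x_cancel[OF assms sig_R[OF assms R1] R1] by blast
qed

lemma sig_zero: "sig R x n i 0 = 0" by (simp add: sig_def coord_zero)

lemma unit_R: "unitR R u \<Longrightarrow> u \<in> R" by (simp add: unitR_def)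
lemma unit_one: "unitR R 1" by (auto simp: unitR_def intro: bexI[of _ 1])
lemma unit_mult: assumes "unitR R u" "unitR R v" shows "unitR R (u * v)"
proof -
  obtain u' v' where h: "u'\<in>R" "v'\<in>R" "u*u'=1" "u'*u=1" "v*v'=1" "v'*v=1" using assms unfolding unitR_def by blast
  have "(u*v)*(v'*u') = u*(v*v')*u'" by (simp add: mult.assoc)
  then have 1: "(u*v)*(v'*u') = 1" using h by simp
  have "(v'*u')*(u*v) = v'*(u'*u)*v" by (simp add: mult.assoc)
  then have 2: "(v'*u')*(u*v) = 1" using h by simp
  have "u*v \<in> R" using assms Rmul unit_R by blast
  then show ?thesis using 1 2 h Rmul unfolding unitR_def by blast
qed
lemma unit_sig: assumes "i < n" "unitR R u" shows "unitR R (sig R x n i u)"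
proof -
  obtain u' where h: "u'\<in>R" "u*u'=1" "u'*u=1" "u \<in> R" using assms unfolding unitR_def by blast
  have "sig R x n i u * sig R x n i u' = 1" using sig_mult[OF assms(1) h(4) h(1)] h sig_one[OF assms(1)] by simp
  moreover have "sig R x n i u' * sig R x n i u = 1" using sig_mult[OF assms(1) h(1) h(4)] h sig_one[OF assms(1)] by simp
  ultimately show ?thesis unfolding unitR_def using sig_R[OF assms(1)] h by blast
qed
lemma unit_sigpow: assumes "i < n" "unitR R u" shows "unitR R ((sig R x n i ^^ g) u)"
  by (induction g) (auto simp: assms unit_sig)

end


definition Sfun :: "'a::ring_1 set \<Rightarrow> (nat \<Rightarrow> 'a) \<Rightarrow> nat \<Rightarrow> nat list \<Rightarrow> (nat \<Rightarrow> nat) \<Rightarrow> 'a \<Rightarrow> 'a" where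
  "Sfun R x n ks \<gamma> = fold (\<lambda>i f. f \<circ> (sig R x n i ^^ \<gamma> i)) ks id"

lemma fold_comp: fixes h :: "nat \<Rightarrow> 'a \<Rightarrow> 'a" and f0 :: "'a \<Rightarrow> 'a" shows "fold (\<lambda>i f. f \<circ> h i) ks f0 = f0 \<circ> fold (\<lambda>i f. f \<circ> h i) ks id"
proof (induction ks arbitrary: f0)
  case Nil then show ?case by simp
next
  case (Cons k ks)
  have A: "fold (\<lambda>i f. f \<circ> h i) (k # ks) f0 = fold (\<lambda>i f. f \<circ> h i) ks (f0 \<circ> h k)" by simp
  have B: "fold (\<lambda>i f. f \<circ> h i) ks (f0 \<circ> h k) = (f0 \<circ> h k) \<circ> fold (\<lambda>i f. f \<circ> h i) ks id" by (rule Cons)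
  have C: "fold (\<lambda>i f. f \<circ> h i) (k # ks) id = h k \<circ> fold (\<lambda>i f. f \<circ> h i) ks id"
  proof -
    have "fold (\<lambda>i f. f \<circ> h i) (k # ks) id = fold (\<lambda>i f. f \<circ> h i) ks (h k)" by simp
    also have "\<dots> = h k \<circ> fold (\<lambda>i f. f \<circ> h i) ks id" by (rule Cons)
    finally show ?thesis .
  qed
  show ?case by (simp only: A B C comp_assoc)
qed

lemma Sfun_Cons: "Sfun R x n (k # ks) \<gamma> = (sig R x n k ^^ \<gamma> k) \<circ> Sfun R x n ks \<gamma>"
  unfolding Sfun_def using fold_comp[of "\<lambda>i. sig R x n i ^^ \<gamma> i" ks "sig R x n k ^^ \<gamma> k"] by simp

lemma sig_pow_Sfun: "sig_pow R x n \<gamma> = Sfun R x n [0..<n] \<gamma>"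
  by (simp add: sig_pow_def Sfun_def)

context qpbw begin

lemma xpow_R: assumes "k < n" "r \<in> R"
  shows "(sig R x n k ^^ g) r \<in> R \<and> x k ^ g * r = (sig R x n k ^^ g) r * x k ^ g"
proof (induction g)
  case 0 then show ?case using assms by simp
next
  case (Suc g)
  let ?s = "(sig R x n k ^^ g) r"
  have "x k ^ Suc g * r = x k * (x k ^ g * r)" by (simp add: mult.assoc)
  also have "\<dots> = (x k * ?s) * x k ^ g" using Suc by (simp add: mult.assoc)
  also have "\<dots> = sig R x n k ?s * (x k * x k ^ g)" using x_comm[OF assms(1)] Suc by (simp add: mult.assoc)
  finally show ?case using sig_R[OF assms(1)] Suc by simp
qed

lemma PL_R: assumes "set ks \<subseteq> {..<n}" "r \<in> R"
  shows "Sfun R x n ks \<gamma> r \<in> R \<and> PL x ks \<gamma> * r = Sfun R x n ks \<gamma> r * PL x ks \<gamma>"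
  using assms
proof (induction ks arbitrary: r)
  case Nil then show ?case by (simp add: Sfun_def)
next
  case (Cons k ks)
  let ?s = "Sfun R x n ks \<gamma> r"
  have k: "k < n" using Cons by auto
  have IH: "?s \<in> R \<and> PL x ks \<gamma> * r = ?s * PL x ks \<gamma>" using Cons by auto
  have "PL x (k # ks) \<gamma> * r = x k ^ \<gamma> k * (PL x ks \<gamma> * r)" by (simp add: mult.assoc)
  also have "\<dots> = (x k ^ \<gamma> k * ?s) * PL x ks \<gamma>" using IH by (simp add: mult.assoc)
  also have "\<dots> = (sig R x n k ^^ \<gamma> k) ?s * PL x (k # ks) \<gamma>" using xpow_R[OF k, of ?s] IH by (simp add: mult.assoc)
  finally show ?case using xpow_R[OF k, of ?s] IH by (simp add: Sfun_Cons)
qed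

lemma mon_R: assumes "r \<in> R"
  shows "sig_pow R x n \<gamma> r \<in> R \<and> mon x n \<gamma> * r = sig_pow R x n \<gamma> r * mon x n \<gamma>"
proof -
  have "set [0..<n] \<subseteq> {..<n}" by auto
  then show ?thesis using PL_R[of "[0..<n]" r \<gamma>] assms by (simp add: sig_pow_Sfun mon_def)
qed

lemma Sfun_bij: "set ks \<subseteq> {..<n} \<Longrightarrow> bij_betw (Sfun R x n ks \<gamma>) R R"
proof (induction ks)
  case Nil then show ?case by (simp add: Sfun_def bij_betw_def)
next
  case (Cons k ks)
  have "bij_betw (sig R x n k) R R" using bj Cons.prems unfolding bijective_ext_def by auto
  then have "bij_betw (sig R x n k ^^ \<gamma> k) R R" by (rule bij_betw_funpow)
  moreover have "bij_betw (Sfun R x n ks \<gamma>) R R" using Cons by auto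
  ultimately show ?case unfolding Sfun_Cons by (rule bij_betw_trans[rotated])
qed

lemma funpow_sig_zero: "(sig R x n k ^^ g) 0 = 0"
  by (induction g) (auto simp: sig_zero)

lemma Sfun_zero: "Sfun R x n ks \<gamma> 0 = 0"
  by (induction ks) (auto simp: Sfun_def[of _ _ _ "[]"] Sfun_Cons funpow_sig_zero)

lemma sigpow_bij: "bij_betw (sig_pow R x n \<gamma>) R R"
proof -
  have "set [0..<n] \<subseteq> {..<n}" by auto
  then show ?thesis using Sfun_bij[of "[0..<n]"] by (simp add: sig_pow_Sfun)
qed

lemma sigpow_zero: "sig_pow R x n \<gamma> 0 = 0"
  by (simp add: sig_pow_Sfun Sfun_zero)

lemma swap: assumes "k < i" "i < n" shows "\<exists>u. unitR R u \<and> x i * x k = u * (x k * x i)"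
proof -
  obtain c where c: "c \<in> R" "x i * x k = c * x k * x i"
    using qc assms unfolding quasi_commutative_def by (meson DiffD1 order.strict_trans)
  have e: "(\<lambda>l. ei k l + ei i l) \<in> expv n" using assms by (auto simp: expv_def ei_def)
  have "coord R x n (x i * x k) (\<lambda>l. ei k l + ei i l) = c"
    using coord_term[OF e c(1)] c(2) mon_eij[OF assms, of x] by (simp add: mult.assoc)
  moreover obtain u where "u \<in> R" "u * coord R x n (x i * x k) (\<lambda>l. ei k l + ei i l) = 1"
    "coord R x n (x i * x k) (\<lambda>l. ei k l + ei i l) * u = 1"
    using bj assms unfolding bijective_ext_def by blast
  ultimately have "unitR R c" using c unfolding unitR_def by blast
  then show ?thesis using c by (auto simp: mult.assoc)
qed

lemma swap_pow: assumes "k < i" "i < n" shows "\<exists>u. unitR R u \<and> x i * x k ^ g = u * (x k ^ g * x i)"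
proof (induction g)
  case 0 then show ?case using unit_one by auto
next
  case (Suc g)
  then obtain u where u: "unitR R u" "x i * x k ^ g = u * (x k ^ g * x i)" by blast
  obtain v where v: "unitR R v" "x i * x k = v * (x k * x i)" using swap[OF assms] by blast
  have k: "k < n" using assms by simp
  have "x i * x k ^ Suc g = (x i * x k) * x k ^ g" by (simp add: mult.assoc)
  also have "\<dots> = v * (x k * (x i * x k ^ g))" using v by (simp add: mult.assoc)
  also have "\<dots> = v * ((x k * u) * (x k ^ g * x i))" using u by (simp add: mult.assoc)
  also have "\<dots> = (v * sig R x n k u) * (x k ^ Suc g * x i)"
    using x_comm[OF k unit_R[OF u(1)]] by (simp add: mult.assoc)
  finally show ?case using unit_mult[OF v(1) unit_sig[OF k u(1)]] by blast
qed

lemma swap_PL: assumes "set ks \<subseteq> {..<i}" "i < n"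
  shows "\<exists>u. unitR R u \<and> x i * PL x ks \<gamma> = u * (PL x ks \<gamma> * x i)"
  using assms(1)
proof (induction ks)
  case Nil then show ?case using unit_one by auto
next
  case (Cons k ks)
  then obtain u where u: "unitR R u" "x i * PL x ks \<gamma> = u * (PL x ks \<gamma> * x i)" by auto
  have ki: "k < i" using Cons by auto
  then have k: "k < n" using assms by simp
  obtain v where v: "unitR R v" "x i * x k ^ \<gamma> k = v * (x k ^ \<gamma> k * x i)" using swap_pow[OF ki assms(2)] by blast
  have "x i * PL x (k # ks) \<gamma> = (x i * x k ^ \<gamma> k) * PL x ks \<gamma>" by (simp add: mult.assoc)
  also have "\<dots> = v * ((x k ^ \<gamma> k * u) * (PL x ks \<gamma> * x i))" using v u by (simp add: mult.assoc)
  also have "\<dots> = (v * (sig R x n k ^^ \<gamma> k) u) * (PL x (k # ks) \<gamma> * x i)"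
    using xpow_R[OF k unit_R[OF u(1)]] by (simp add: mult.assoc)
  finally show ?case using unit_mult[OF v(1) unit_sigpow[OF k u(1)]] by blast
qed

lemma x_mon: assumes "i < n" shows "\<exists>u. unitR R u \<and> x i * mon x n \<gamma> = u * mon x n (\<gamma>(i := Suc (\<gamma> i)))"
proof -
  let ?g = "\<gamma>(i := Suc (\<gamma> i))"
  obtain u where u: "unitR R u" "x i * PL x [0..<i] \<gamma> = u * (PL x [0..<i] \<gamma> * x i)"
  proof -
    have "set [0..<i] \<subseteq> {..<i}" by auto
    then show ?thesis using that swap_PL[OF _ assms, of "[0..<i]"] by blast
  qed
  have p1: "PL x [0..<i] ?g = PL x [0..<i] \<gamma>" by (rule PL_cong) auto
  have p2: "PL x [Suc i..<n] ?g = PL x [Suc i..<n] \<gamma>" by (rule PL_cong) auto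
  have "x i * mon x n \<gamma> = (x i * PL x [0..<i] \<gamma>) * (x i ^ \<gamma> i * PL x [Suc i..<n] \<gamma>)"
    using mon_split[OF assms, of x \<gamma>] by (simp add: mult.assoc)
  also have "\<dots> = u * (PL x [0..<i] \<gamma> * (x i ^ Suc (\<gamma> i) * PL x [Suc i..<n] \<gamma>))"
    using u by (simp add: mult.assoc)
  also have "\<dots> = u * mon x n ?g" using mon_split[OF assms, of x ?g] p1 p2 by simp
  finally show ?thesis using u by blast
qed

lemma xpow_mon: assumes "k < n" shows "\<exists>u. unitR R u \<and> x k ^ g * mon x n \<gamma> = u * mon x n (\<gamma>(k := \<gamma> k + g))"
proof (induction g)
  case 0 then show ?case using unit_one by auto
next
  case (Suc g)
  then obtain u where u: "unitR R u" "x k ^ g * mon x n \<gamma> = u * mon x n (\<gamma>(k := \<gamma> k + g))" by blast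
  obtain v where v: "unitR R v" "x k * mon x n (\<gamma>(k := \<gamma> k + g)) = v * mon x n (\<gamma>(k := Suc (\<gamma> k + g)))"
    using x_mon[OF assms, of "\<gamma>(k := \<gamma> k + g)"] by auto
  have "x k ^ Suc g * mon x n \<gamma> = (x k * u) * mon x n (\<gamma>(k := \<gamma> k + g))" using u by (simp add: mult.assoc)
  also have "\<dots> = sig R x n k u * (x k * mon x n (\<gamma>(k := \<gamma> k + g)))" using x_comm[OF assms unit_R[OF u(1)]] by (simp add: mult.assoc)
  also have "\<dots> = (sig R x n k u * v) * mon x n (\<gamma>(k := \<gamma> k + Suc g))" using v by (simp add: mult.assoc)
  finally show ?case using unit_mult[OF unit_sig[OF assms u(1)] v(1)] by blast
qed

lemma PL_mon: assumes "set ks \<subseteq> {..<n}" "distinct ks"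
  shows "\<exists>u. unitR R u \<and> PL x ks \<alpha> * mon x n \<beta> = u * mon x n (\<lambda>k. \<beta> k + (if k \<in> set ks then \<alpha> k else 0))"
  using assms
proof (induction ks)
  case Nil then show ?case using unit_one by auto
next
  case (Cons k ks)
  let ?b = "\<lambda>l. \<beta> l + (if l \<in> set ks then \<alpha> l else 0)"
  obtain u where u: "unitR R u" "PL x ks \<alpha> * mon x n \<beta> = u * mon x n ?b" using Cons by auto
  have k: "k < n" using Cons by auto
  obtain v where v: "unitR R v" "x k ^ \<alpha> k * mon x n ?b = v * mon x n (?b(k := ?b k + \<alpha> k))"
    using xpow_mon[OF k] by blast
  have e: "?b(k := ?b k + \<alpha> k) = (\<lambda>l. \<beta> l + (if l \<in> set (k # ks) then \<alpha> l else 0))"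
    using Cons.prems by (auto simp: fun_eq_iff)
  have "PL x (k # ks) \<alpha> * mon x n \<beta> = (x k ^ \<alpha> k * u) * mon x n ?b" using u by (simp add: mult.assoc)
  also have "\<dots> = (sig R x n k ^^ \<alpha> k) u * (x k ^ \<alpha> k * mon x n ?b)"
    using xpow_R[OF k unit_R[OF u(1)]] by (simp add: mult.assoc)
  also have "\<dots> = ((sig R x n k ^^ \<alpha> k) u * v) * mon x n (\<lambda>l. \<beta> l + (if l \<in> set (k # ks) then \<alpha> l else 0))"
    using v e by (simp add: mult.assoc)
  finally show ?case using unit_mult[OF unit_sigpow[OF k u(1)] v(1)] by blast
qed

lemma mon_mult: "\<exists>u. unitR R u \<and> mon x n \<alpha> * mon x n \<beta> = u * mon x n (\<lambda>k. \<alpha> k + \<beta> k)"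
proof -
  obtain u where u: "unitR R u" "PL x [0..<n] \<alpha> * mon x n \<beta> = u * mon x n (\<lambda>k. \<beta> k + (if k \<in> set [0..<n] then \<alpha> k else 0))"
  proof -
    have "set [0..<n] \<subseteq> {..<n}" by auto
    moreover have "distinct [0..<n]" by simp
    ultimately show ?thesis using that PL_mon[of "[0..<n]" \<alpha> \<beta>] by blast
  qed
  have "mon x n (\<lambda>k. \<beta> k + (if k \<in> set [0..<n] then \<alpha> k else 0)) = mon x n (\<lambda>k. \<alpha> k + \<beta> k)"
    by (rule mon_cong) auto
  then show ?thesis using u by (auto simp: mon_def)
qed

lemma cpair: assumes "\<alpha> \<in> expv n" "\<beta> \<in> expv n"
  shows "unitR R (cpair R x n \<alpha> \<beta>) \<and> mon x n \<alpha> * mon x n \<beta> = cpair R x n \<alpha> \<beta> * mon x n (\<lambda>k. \<alpha> k + \<beta> k)"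
proof -
  obtain u where u: "unitR R u" "mon x n \<alpha> * mon x n \<beta> = u * mon x n (\<lambda>k. \<alpha> k + \<beta> k)" using mon_mult by blast
  have e: "(\<lambda>k. \<alpha> k + \<beta> k) \<in> expv n" using assms by (auto simp: expv_def)
  have "cpair R x n \<alpha> \<beta> = u" unfolding cpair_def u(2) using coord_term[OF e unit_R[OF u(1)]] .
  then show ?thesis using u by simp
qed

end


definition rowsum :: "(nat \<Rightarrow> 'a::ring_1) \<Rightarrow> nat \<Rightarrow> nat \<Rightarrow> (nat \<Rightarrow> 'a) \<Rightarrow> (nat \<Rightarrow> nat)
                    \<Rightarrow> (nat \<Rightarrow> nat \<Rightarrow> nat) \<Rightarrow> (nat \<Rightarrow> 'a) \<Rightarrow> nat \<Rightarrow> 'a" where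
  "rowsum x n t c \<iota> \<beta> h k = (\<Sum>j<t. if \<iota> j = k then h j * (c j * mon x n (\<beta> j)) else 0)"

lemma syzL_iff: "h \<in> syzL x n m t c \<iota> \<beta> \<longleftrightarrow> (\<forall>j\<ge>t. h j = 0) \<and> (\<forall>k<m. rowsum x n t c \<iota> \<beta> h k = 0)"
  by (simp add: syzL_def rowsum_def)

lemma rowsum_lin:
  assumes "finite P"
  shows "rowsum x n t c \<iota> \<beta> (\<lambda>j. \<Sum>p\<in>P. a p * g p j) k = (\<Sum>p\<in>P. a p * rowsum x n t c \<iota> \<beta> (g p) k)"
proof -
  have "rowsum x n t c \<iota> \<beta> (\<lambda>j. \<Sum>p\<in>P. a p * g p j) k
      = (\<Sum>j<t. \<Sum>p\<in>P. a p * (if \<iota> j = k then g p j * (c j * mon x n (\<beta> j)) else 0))"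
    unfolding rowsum_def
    by (rule sum.cong) (auto simp: sum_distrib_right mult.assoc)
  also have "\<dots> = (\<Sum>p\<in>P. \<Sum>j<t. a p * (if \<iota> j = k then g p j * (c j * mon x n (\<beta> j)) else 0))"
    by (rule sum.swap)
  also have "\<dots> = (\<Sum>p\<in>P. a p * rowsum x n t c \<iota> \<beta> (g p) k)"
    unfolding rowsum_def by (simp add: sum_distrib_left)
  finally show ?thesis .
qed

lemma rowsum_single: "rowsum x n t c \<iota> \<beta> (\<lambda>j. a * g j) k = a * rowsum x n t c \<iota> \<beta> g k"
  using rowsum_lin[of "{()}" x n t c \<iota> \<beta> "\<lambda>_. a" "\<lambda>_. g" k] by simp

lemma rowsum_sum: "finite P \<Longrightarrow> rowsum x n t c \<iota> \<beta> (\<lambda>j. \<Sum>p\<in>P. g p j) k = (\<Sum>p\<in>P. rowsum x n t c \<iota> \<beta> (g p) k)"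
  using rowsum_lin[of P x n t c \<iota> \<beta> "\<lambda>_. 1" g k] by simp

lemma vspan_zero: "(\<lambda>_. 0) \<in> vspan K S"
  unfolding vspan_def by (rule CollectI, rule exI[of _ "{}"]) auto

lemma vspan_single: "s \<in> S \<Longrightarrow> a \<in> K \<Longrightarrow> (\<lambda>j. a * s j) \<in> vspan K S"
  unfolding vspan_def by (rule CollectI, rule exI[of _ "{s}"], rule exI[of _ "\<lambda>_. a"]) auto

lemma sum_ext: assumes "finite A" "B \<subseteq> A"
  shows "(\<Sum>s\<in>A. (if s \<in> B then b s else 0) * f s) = (\<Sum>s\<in>B. b s * (f s :: 'a::ring_1))"
proof -
  have "(\<Sum>s\<in>A. (if s \<in> B then b s else 0) * f s) = (\<Sum>s\<in>A. if s \<in> B then b s * f s else 0)"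
    by (rule sum.cong) auto
  also have "\<dots> = (\<Sum>s\<in>A \<inter> B. b s * f s)" using assms(1) by (simp add: sum.inter_restrict)
  also have "A \<inter> B = B" using assms(2) by blast
  finally show ?thesis .
qed

lemma vspan_add: assumes "0 \<in> K" "\<forall>a\<in>K. \<forall>b\<in>K. a + b \<in> K" "v \<in> vspan K S" "w \<in> vspan K S"
  shows "(\<lambda>j. v j + w j) \<in> vspan K S"
proof -
  obtain F a where F: "finite F" "F \<subseteq> S" "\<forall>s\<in>F. a s \<in> K" "v = (\<lambda>j. \<Sum>s\<in>F. a s * s j)"
    using assms(3) unfolding vspan_def by blast
  obtain G b where G: "finite G" "G \<subseteq> S" "\<forall>s\<in>G. b s \<in> K" "w = (\<lambda>j. \<Sum>s\<in>G. b s * s j)"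
    using assms(4) unfolding vspan_def by blast
  let ?a = "\<lambda>s. if s \<in> F then a s else 0"
  let ?b = "\<lambda>s. if s \<in> G then b s else 0"
  have "\<And>j. v j = (\<Sum>s\<in>F\<union>G. ?a s * s j)"
  proof -
    fix j show "v j = (\<Sum>s\<in>F\<union>G. ?a s * s j)"
      unfolding F(4) using sum_ext[of "F\<union>G" F a "\<lambda>s. s j"] F(1) G(1) by auto
  qed
  moreover have "\<And>j. w j = (\<Sum>s\<in>F\<union>G. ?b s * s j)"
  proof -
    fix j show "w j = (\<Sum>s\<in>F\<union>G. ?b s * s j)"
      unfolding G(4) using sum_ext[of "F\<union>G" G b "\<lambda>s. s j"] F(1) G(1) by auto
  qed
  ultimately have "(\<lambda>j. v j + w j) = (\<lambda>j. \<Sum>s\<in>F\<union>G. (?a s + ?b s) * s j)"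
    by (simp add: sum.distrib distrib_right)
  moreover have "\<forall>s\<in>F\<union>G. ?a s + ?b s \<in> K" using F G assms(1,2) by auto
  moreover have "finite (F\<union>G)" "F\<union>G \<subseteq> S" using F G by auto
  ultimately show ?thesis unfolding vspan_def
    by (intro CollectI exI[of _ "F\<union>G"] exI[of _ "\<lambda>s. ?a s + ?b s"]) simp
qed

lemma vspan_sum: assumes "0 \<in> K" "\<forall>a\<in>K. \<forall>b\<in>K. a + b \<in> K" "finite P" "\<forall>p\<in>P. g p \<in> vspan K S"
  shows "(\<lambda>j. \<Sum>p\<in>P. g p j) \<in> vspan K S"
  using assms(3,4)
proof (induction P rule: finite_induct)
  case empty then show ?case using vspan_zero by simp
next
  case (insert p P)
  then show ?case using vspan_add[OF assms(1,2), of "g p" S "\<lambda>j. \<Sum>p\<in>P. g p j"] by simp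
qed

lemma vspan_UNIV_closed: "(\<lambda>j. \<Sum>p\<in>P. g p j) \<in> vspan UNIV S" if "finite P" "\<forall>p\<in>P. g p \<in> vspan UNIV S"
  using vspan_sum[of UNIV P g S] that by simp



lemma gam_plus: "(\<forall>k. \<beta> j k \<le> \<delta> k) \<Longrightarrow> (\<lambda>k. gam \<beta> \<delta> j k + \<beta> j k) = \<delta>"
  by (auto simp: gam_def fun_eq_iff)

lemma gam_expv: "\<delta> \<in> expv n \<Longrightarrow> gam \<beta> \<delta> j \<in> expv n"
  by (auto simp: gam_def expv_def)

lemma XJ_facts: assumes a: "XJ \<iota> \<beta> J = Some (i, \<delta>)"
  shows "J \<noteq> {} \<and> (\<forall>j\<in>J. \<iota> j = i) \<and> \<delta> = (\<lambda>k. Max ((\<lambda>j. \<beta> j k) ` J))"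
proof -
  have c: "J \<noteq> {} \<and> (\<forall>j\<in>J. \<forall>j'\<in>J. \<iota> j = \<iota> j')"
  proof (rule ccontr)
    assume "\<not> ?thesis"
    then have "XJ \<iota> \<beta> J = None" unfolding XJ_def by argo
    then show False using a by simp
  qed
  then have "XJ \<iota> \<beta> J = Some (\<iota> (SOME j. j \<in> J), \<lambda>k. Max ((\<lambda>j. \<beta> j k) ` J))"
    unfolding XJ_def by argo
  then have h: "i = \<iota> (SOME j. j \<in> J)" "\<delta> = (\<lambda>k. Max ((\<lambda>j. \<beta> j k) ` J))" using a by simp_all
  have "(SOME j. j \<in> J) \<in> J" using c by (simp add: some_in_eq)
  then show ?thesis using h c by blast
qed

lemma XJ_eq: assumes "J \<noteq> {}" "\<forall>j\<in>J. \<iota> j = i"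
  shows "XJ \<iota> \<beta> J = Some (i, \<lambda>k. Max ((\<lambda>j. \<beta> j k) ` J))"
proof -
  have s: "(SOME j. j \<in> J) \<in> J" using assms(1) by (simp add: some_in_eq)
  have c: "J \<noteq> {} \<and> (\<forall>j\<in>J. \<forall>j'\<in>J. \<iota> j = \<iota> j')" using assms by simp
  then have "XJ \<iota> \<beta> J = Some (\<iota> (SOME j. j \<in> J), \<lambda>k. Max ((\<lambda>j. \<beta> j k) ` J))"
    unfolding XJ_def by argo
  then show ?thesis using s assms(2) by simp
qed

context qpbw begin

lemma Kid: assumes "b \<in> R" "c \<in> R" "\<gamma> \<in> expv n" "\<beta> \<in> expv n"
  shows "(b * mon x n \<gamma>) * (c * mon x n \<beta>) = (b * (sig_pow R x n \<gamma> c * cpair R x n \<gamma> \<beta>)) * mon x n (\<lambda>k. \<gamma> k + \<beta> k)"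
proof -
  have "(b * mon x n \<gamma>) * (c * mon x n \<beta>) = b * (mon x n \<gamma> * c) * mon x n \<beta>" by (simp add: mult.assoc)
  also have "\<dots> = b * sig_pow R x n \<gamma> c * (mon x n \<gamma> * mon x n \<beta>)" using mon_R[OF assms(2)] by (simp add: mult.assoc)
  also have "\<dots> = b * sig_pow R x n \<gamma> c * (cpair R x n \<gamma> \<beta> * mon x n (\<lambda>k. \<gamma> k + \<beta> k))"
    using cpair[OF assms(3,4)] by simp
  finally show ?thesis by (simp add: mult.assoc)
qed

lemma cpair_R: "\<alpha> \<in> expv n \<Longrightarrow> \<beta> \<in> expv n \<Longrightarrow> cpair R x n \<alpha> \<beta> \<in> R"
  using cpair unit_R by blast

lemma sigpow_R: "r \<in> R \<Longrightarrow> sig_pow R x n \<gamma> r \<in> R"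
  using mon_R by blast

lemma rowsum_sJ:
  assumes "J \<subseteq> {..<t}" "\<forall>j\<in>J. \<iota> j = i \<and> (\<forall>k. \<beta> j k \<le> \<delta> k) \<and> \<beta> j \<in> expv n \<and> c j \<in> R \<and> b j \<in> R" "\<delta> \<in> expv n"
  shows "rowsum x n t c \<iota> \<beta> (sJ x n \<beta> \<delta> J b) k = (if k = i then (\<Sum>j\<in>J. b j * (sig_pow R x n (gam \<beta> \<delta> j) (c j) * cpair R x n (gam \<beta> \<delta> j) (\<beta> j))) * mon x n \<delta> else 0)"
proof -
  have "rowsum x n t c \<iota> \<beta> (sJ x n \<beta> \<delta> J b) k = (\<Sum>j\<in>J. if \<iota> j = k then (b j * mon x n (gam \<beta> \<delta> j)) * (c j * mon x n (\<beta> j)) else 0)"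
    unfolding rowsum_def
    by (rule sum.mono_neutral_cong_right) (use assms(1) in \<open>auto simp: sJ_def\<close>)
  also have "\<dots> = (\<Sum>j\<in>J. if k = i then (b j * (sig_pow R x n (gam \<beta> \<delta> j) (c j) * cpair R x n (gam \<beta> \<delta> j) (\<beta> j))) * mon x n \<delta> else 0)"
  proof (rule sum.cong)
    fix j assume j: "j \<in> J"
    then have h: "\<iota> j = i" "\<forall>k. \<beta> j k \<le> \<delta> k" "\<beta> j \<in> expv n" "c j \<in> R" "b j \<in> R" using assms(2) by auto
    show "(if \<iota> j = k then (b j * mon x n (gam \<beta> \<delta> j)) * (c j * mon x n (\<beta> j)) else 0) =
      (if k = i then (b j * (sig_pow R x n (gam \<beta> \<delta> j) (c j) * cpair R x n (gam \<beta> \<delta> j) (\<beta> j))) * mon x n \<delta> else 0)"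
      using Kid[OF h(5) h(4) gam_expv[OF assms(3)] h(3)] gam_plus[of \<beta> j \<delta>, OF h(2)] h(1) by auto
  qed simp
  also have "\<dots> = (if k = i then (\<Sum>j\<in>J. b j * (sig_pow R x n (gam \<beta> \<delta> j) (c j) * cpair R x n (gam \<beta> \<delta> j) (\<beta> j))) * mon x n \<delta> else 0)"
    by (simp add: sum_distrib_right)
  finally show ?thesis .
qed

end


lemma sum_prod_delta: assumes "finite I" "finite D" "i0 \<in> I"
  shows "(\<Sum>p\<in>I \<times> D. if fst p = i0 then G (snd p) else (0::'a::comm_monoid_add)) = (\<Sum>d\<in>D. G d)"
proof -
  have "(\<Sum>p\<in>I \<times> D. if fst p = i0 then G (snd p) else 0) = (\<Sum>i\<in>I. \<Sum>d\<in>D. if i = i0 then G d else 0)"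
    by (simp add: sum.cartesian_product case_prod_beta)
  also have "\<dots> = (\<Sum>i\<in>I. if i = i0 then (\<Sum>d\<in>D. G d) else 0)" by (rule sum.cong) auto
  also have "\<dots> = (\<Sum>d\<in>D. G d)" using assms by simp
  finally show ?thesis .
qed

locale lset = qpbw +
  fixes m t :: nat and c :: "nat \<Rightarrow> 'a::ring_1" and \<iota> :: "nat \<Rightarrow> nat" and \<beta> :: "nat \<Rightarrow> nat \<Rightarrow> nat"
    and B :: "nat set \<Rightarrow> (nat \<Rightarrow> 'a) set"
  assumes cR: "\<forall>j<t. c j \<in> R \<and> c j \<noteq> 0"
    and ib: "\<forall>j<t. \<iota> j < m \<and> \<beta> j \<in> expv n"
    and hB: "\<forall>J i \<delta>. J \<subseteq> {..<t} \<and> J \<noteq> {} \<and> saturated t \<iota> \<beta> J \<and> XJ \<iota> \<beta> J = Some (i, \<delta>) \<longrightarrow>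
           finite (B J) \<and> B J \<subseteq> syzR R x n c \<beta> \<delta> J \<and> vspan R (B J) = syzR R x n c \<beta> \<delta> J"
begin

definition good where "good J i \<delta> \<longleftrightarrow> J \<subseteq> {..<t} \<and> J \<noteq> {} \<and> saturated t \<iota> \<beta> J \<and> XJ \<iota> \<beta> J = Some (i, \<delta>)"

lemma good_facts: assumes "good J i \<delta>"
  shows "finite J \<and> (\<forall>j\<in>J. \<iota> j = i \<and> (\<forall>k. \<beta> j k \<le> \<delta> k) \<and> \<beta> j \<in> expv n \<and> c j \<in> R) \<and> \<delta> \<in> expv n \<and> i < m"
proof -
  have J: "J \<subseteq> {..<t}" "J \<noteq> {}" and X: "XJ \<iota> \<beta> J = Some (i, \<delta>)" using assms by (auto simp: good_def)
  have fin: "finite J" using J(1) finite_subset by blast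
  have f: "\<forall>j\<in>J. \<iota> j = i" "\<delta> = (\<lambda>k. Max ((\<lambda>j. \<beta> j k) ` J))" using XJ_facts[OF X] by auto
  have le: "\<forall>j\<in>J. \<forall>k. \<beta> j k \<le> \<delta> k" using fin f(2) by auto
  have ex: "\<forall>j\<in>J. \<beta> j \<in> expv n" "\<forall>j\<in>J. c j \<in> R" using J(1) ib cR by auto
  have "\<delta> \<in> expv n"
    unfolding expv_def
  proof (intro CollectI allI impI)
    fix k assume "k \<ge> n"
    then have "\<forall>j\<in>J. \<beta> j k = 0" using ex(1) by (auto simp: expv_def)
    then have "(\<lambda>j. \<beta> j k) ` J = {0}" using J(2) by auto
    then show "\<delta> k = 0" using f(2) by simp
  qed
  moreover obtain j where "j \<in> J" using J(2) by blast
  then have "i < m" using f(1) J(1) ib by auto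
  ultimately show ?thesis using fin f le ex by blast
qed

lemma part1: assumes "good J i \<delta>" "b \<in> B J"
  shows "sJ x n \<beta> \<delta> J b \<in> syzL x n m t c \<iota> \<beta> \<and> homog R x n t \<iota> \<beta> (sJ x n \<beta> \<delta> J b) (i, \<delta>)"
proof -
  have g: "finite J" "\<forall>j\<in>J. \<iota> j = i \<and> (\<forall>k. \<beta> j k \<le> \<delta> k) \<and> \<beta> j \<in> expv n \<and> c j \<in> R" "\<delta> \<in> expv n"
    using good_facts[OF assms(1)] by auto
  have J: "J \<subseteq> {..<t}" using assms(1) by (simp add: good_def)
  have "b \<in> syzR R x n c \<beta> \<delta> J" using hB assms unfolding good_def by blast
  then have b: "\<forall>j\<in>J. b j \<in> R" "(\<Sum>j\<in>J. b j * (sig_pow R x n (gam \<beta> \<delta> j) (c j) * cpair R x n (gam \<beta> \<delta> j) (\<beta> j))) = 0"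
    unfolding syzR_def by auto
  have "\<forall>k. rowsum x n t c \<iota> \<beta> (sJ x n \<beta> \<delta> J b) k = 0"
    using rowsum_sJ[OF J, where i=i and \<delta>=\<delta> and b=b and \<beta>=\<beta> and c=c and \<iota>=\<iota>] g b by simp
  moreover have "\<forall>j\<ge>t. sJ x n \<beta> \<delta> J b j = 0" using J by (auto simp: sJ_def)
  ultimately have 1: "sJ x n \<beta> \<delta> J b \<in> syzL x n m t c \<iota> \<beta>" by (simp add: syzL_iff)
  have "homog R x n t \<iota> \<beta> (sJ x n \<beta> \<delta> J b) (i, \<delta>)"
    unfolding homog_def
  proof (intro allI impI)
    fix j assume "j < t"
    show "\<exists>d \<alpha>. d \<in> R \<and> \<alpha> \<in> expv n \<and> sJ x n \<beta> \<delta> J b j = d * mon x n \<alpha> \<and>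
       (sJ x n \<beta> \<delta> J b j = 0 \<or> \<iota> j = fst (i, \<delta>) \<and> (\<lambda>k. \<alpha> k + \<beta> j k) = snd (i, \<delta>))"
    proof (cases "j \<in> J")
      case True
      then show ?thesis using b(1) g(2) gam_expv[OF g(3)] gam_plus[of \<beta> j \<delta>]
        by (intro exI[of _ "b j"] exI[of _ "gam \<beta> \<delta> j"]) (simp add: sJ_def)
    next
      case False
      have "(\<lambda>_. 0) \<in> expv n" by (simp add: expv_def)
      then show ?thesis using False by (intro exI[of _ 0] exI[of _ "\<lambda>_. 0"]) (simp add: sJ_def)
    qed
  qed
  then show ?thesis using 1 by simp
qed

abbreviation "SS \<equiv> {sJ x n \<beta> \<delta> J b | J i \<delta> b. J \<subseteq> {..<t} \<and> J \<noteq> {} \<and> saturated t \<iota> \<beta> J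
                 \<and> XJ \<iota> \<beta> J = Some (i, \<delta>) \<and> b \<in> B J}"

lemma SS_mem: assumes "good J i \<delta>" "b \<in> B J" shows "sJ x n \<beta> \<delta> J b \<in> SS"
  using assms unfolding good_def by (intro CollectI exI[of _ J] exI[of _ i] exI[of _ \<delta>] exI[of _ b]) simp

lemma part2a: "vspan UNIV SS \<subseteq> syzL x n m t c \<iota> \<beta>"
proof
  fix v assume "v \<in> vspan UNIV SS"
  then obtain F a where F: "finite F" "F \<subseteq> SS" "v = (\<lambda>j. \<Sum>s\<in>F. a s * s j)"
    unfolding vspan_def by blast
  have sy: "\<forall>s\<in>F. s \<in> syzL x n m t c \<iota> \<beta>"
  proof
    fix s assume "s \<in> F"
    then have "s \<in> SS" using F(2) by blast
    then obtain J i \<delta> b where "s = sJ x n \<beta> \<delta> J b" "good J i \<delta>" "b \<in> B J" unfolding good_def by auto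
    then show "s \<in> syzL x n m t c \<iota> \<beta>" using part1 by blast
  qed
  have "\<forall>j\<ge>t. v j = 0"
  proof (intro allI impI)
    fix j assume "t \<le> j"
    then have "\<forall>s\<in>F. s j = 0" using sy by (simp add: syzL_iff)
    then show "v j = 0" unfolding F(3) by (intro sum.neutral) (metis mult_zero_right)
  qed
  moreover have "\<forall>k<m. rowsum x n t c \<iota> \<beta> v k = 0"
    using sy F(3) rowsum_lin[OF F(1), of x n t c \<iota> \<beta> a "\<lambda>s. s"] by (simp add: syzL_iff)
  ultimately show "v \<in> syzL x n m t c \<iota> \<beta>" by (simp add: syzL_iff)
qed

end


context lset begin

lemma part2b: assumes hS: "h \<in> syzL x n m t c \<iota> \<beta>" shows "h \<in> vspan UNIV SS"
proof -
  define f where "f j = coord R x n (h j)" for j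
  define Sj where "Sj j = {\<alpha>. f j \<alpha> \<noteq> 0}" for j
  have repr: "finite (Sj j) \<and> Sj j \<subseteq> expv n \<and> h j = (\<Sum>\<alpha>\<in>Sj j. f j \<alpha> * mon x n \<alpha>) \<and> (\<forall>\<alpha>. f j \<alpha> \<in> R)" for j
    using coord_repr[of "h j"] unfolding is_repr_def f_def Sj_def by blast
  define D where "D = (\<Union>j<t. (\<lambda>\<alpha>. \<lambda>k. \<alpha> k + \<beta> j k) ` Sj j)"
  have finD: "finite D" unfolding D_def using repr by auto
  have DX: "D \<subseteq> expv n"
  proof
    fix d assume "d \<in> D"
    then obtain j \<alpha> where j: "j < t" "\<alpha> \<in> Sj j" "d = (\<lambda>k. \<alpha> k + \<beta> j k)" unfolding D_def by blast
    then have "\<alpha> \<in> expv n" "\<beta> j \<in> expv n" using repr ib by auto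
    then show "d \<in> expv n" using j(3) by (simp add: expv_def)
  qed
  define I where "I = \<iota> ` {..<t}"
  have finI: "finite I" unfolding I_def by simp
  define Jp where "Jp i \<delta> = {j. j < t \<and> \<iota> j = i \<and> (\<forall>k. \<beta> j k \<le> \<delta> k)}" for i \<delta>
  define comp where "comp i \<delta> = sJ x n \<beta> \<delta> (Jp i \<delta>) (\<lambda>j. f j (gam \<beta> \<delta> j))" for i \<delta>
  define s where "s i \<delta> = (\<Sum>j\<in>Jp i \<delta>. f j (gam \<beta> \<delta> j) * (sig_pow R x n (gam \<beta> \<delta> j) (c j) * cpair R x n (gam \<beta> \<delta> j) (\<beta> j)))" for i \<delta>
  have Jp_sub: "Jp i \<delta> \<subseteq> {..<t}" for i \<delta> unfolding Jp_def by auto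
  have Jp_props: "\<forall>j\<in>Jp i \<delta>. \<iota> j = i \<and> (\<forall>k. \<beta> j k \<le> \<delta> k) \<and> \<beta> j \<in> expv n \<and> c j \<in> R \<and> f j (gam \<beta> \<delta> j) \<in> R" for i \<delta>
    unfolding Jp_def using ib cR repr by auto
  have rs: "rowsum x n t c \<iota> \<beta> (comp i \<delta>) k = (if k = i then s i \<delta> * mon x n \<delta> else 0)" if "\<delta> \<in> expv n" for i \<delta> k
    unfolding comp_def s_def by (rule rowsum_sJ[OF Jp_sub Jp_props that])
  have hA: "h = (\<lambda>j. \<Sum>p\<in>I \<times> D. comp (fst p) (snd p) j)"
  proof (rule ext)
    fix j
    show "h j = (\<Sum>p\<in>I \<times> D. comp (fst p) (snd p) j)"
    proof (cases "j < t")
      case False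
      then have "h j = 0" using hS by (simp add: syzL_iff)
      moreover have "\<forall>p. comp (fst p) (snd p) j = 0" using False by (simp add: comp_def sJ_def Jp_def)
      ultimately show ?thesis by simp
    next
      case True
      define G where "G \<delta> = (if \<forall>k. \<beta> j k \<le> \<delta> k then f j (gam \<beta> \<delta> j) * mon x n (gam \<beta> \<delta> j) else 0)" for \<delta>
      have "(\<Sum>p\<in>I \<times> D. comp (fst p) (snd p) j) = (\<Sum>p\<in>I \<times> D. if fst p = \<iota> j then G (snd p) else 0)"
        by (rule sum.cong) (use True in \<open>auto simp: comp_def sJ_def Jp_def G_def\<close>)
      also have "\<dots> = (\<Sum>\<delta>\<in>D. G \<delta>)" using sum_prod_delta[OF finI finD, of "\<iota> j" G] True by (simp add: I_def)
      also have "\<dots> = (\<Sum>\<delta>\<in>(\<lambda>\<alpha>. \<lambda>k. \<alpha> k + \<beta> j k) ` Sj j. G \<delta>)"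
      proof (rule sum.mono_neutral_right[OF finD])
        show "(\<lambda>\<alpha>. \<lambda>k. \<alpha> k + \<beta> j k) ` Sj j \<subseteq> D" unfolding D_def using True by blast
        show "\<forall>d\<in>D - (\<lambda>\<alpha>. \<lambda>k. \<alpha> k + \<beta> j k) ` Sj j. G d = 0"
        proof
          fix d assume d: "d \<in> D - (\<lambda>\<alpha>. \<lambda>k. \<alpha> k + \<beta> j k) ` Sj j"
          show "G d = 0"
          proof (cases "\<forall>k. \<beta> j k \<le> d k")
            case le: True
            have "d = (\<lambda>k. gam \<beta> d j k + \<beta> j k)" using gam_plus[of \<beta> j d, OF le] by simp
            then have "gam \<beta> d j \<notin> Sj j" using d by blast
            then show ?thesis by (simp add: G_def Sj_def)
          qed (auto simp: G_def)
        qed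
      qed
      also have "\<dots> = (\<Sum>\<alpha>\<in>Sj j. G (\<lambda>k. \<alpha> k + \<beta> j k))"
      proof -
        have inj: "inj_on (\<lambda>\<alpha>. \<lambda>k. \<alpha> k + \<beta> j k) (Sj j)"
          by (rule inj_onI) (simp add: fun_eq_iff)
        show ?thesis using sum.reindex[OF inj, of G] by (simp add: comp_def)
      qed
      also have "\<dots> = (\<Sum>\<alpha>\<in>Sj j. f j \<alpha> * mon x n \<alpha>)"
      proof (rule sum.cong)
        fix \<alpha>
        have "gam \<beta> (\<lambda>k. \<alpha> k + \<beta> j k) j = \<alpha>" by (simp add: gam_def)
        then show "G (\<lambda>k. \<alpha> k + \<beta> j k) = f j \<alpha> * mon x n \<alpha>" by (simp add: G_def)
      qed simp
      also have "\<dots> = h j" using repr by simp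
      finally show ?thesis by simp
    qed
  qed
  have szero: "s i \<delta> = 0" if "i \<in> I" "\<delta> \<in> D" for i \<delta>
  proof -
    have im: "i < m" using that(1) ib unfolding I_def by auto
    have "0 = rowsum x n t c \<iota> \<beta> h i" using hS im by (simp add: syzL_iff)
    also have "\<dots> = rowsum x n t c \<iota> \<beta> (\<lambda>j. \<Sum>p\<in>I \<times> D. comp (fst p) (snd p) j) i"
      by (simp only: hA[symmetric])
    also have "\<dots> = (\<Sum>p\<in>I \<times> D. rowsum x n t c \<iota> \<beta> (comp (fst p) (snd p)) i)"
      using finI finD by (simp add: rowsum_sum)
    also have "\<dots> = (\<Sum>p\<in>I \<times> D. if fst p = i then s i (snd p) * mon x n (snd p) else 0)"
      by (rule sum.cong) (use DX in \<open>auto simp: rs\<close>)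
    also have "\<dots> = (\<Sum>d\<in>D. s i d * mon x n d)" by (rule sum_prod_delta[OF finI finD that(1)])
    finally have z: "(\<Sum>d\<in>D. s i d * mon x n d) = 0" by simp
    have "\<forall>d\<in>D. s i d \<in> R"
    proof
      fix d assume "d \<in> D"
      then have "d \<in> expv n" using DX by auto
      then show "s i d \<in> R" unfolding s_def using Jp_props[of i d] Jp_sub[of i d]
        by (intro Rsum) (auto intro!: Rmul sigpow_R cpair_R gam_expv intro: finite_subset)
    qed
    then show ?thesis using coeffs_zero[OF finD DX _ z that(2)] by simp
  qed
  have compB: "comp i \<delta> \<in> vspan UNIV SS" if iI: "i \<in> I" and dD: "\<delta> \<in> D" for i \<delta>
  proof -
    define J where "J = Jp i \<delta>"
    have cJ: "comp i \<delta> = sJ x n \<beta> \<delta> J (\<lambda>j. f j (gam \<beta> \<delta> j))" by (simp add: comp_def J_def)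
    show ?thesis
    proof (cases "J = {}")
      case True
      then have "comp i \<delta> = (\<lambda>_. 0)" using cJ by (simp add: sJ_def)
      then show ?thesis using vspan_zero by simp
    next
      case Jne: False
      have JT: "J \<subseteq> {..<t}" using Jp_sub J_def by simp
      have finJ: "finite J" using JT finite_subset by blast
      have Jp: "\<forall>j\<in>J. \<iota> j = i \<and> (\<forall>k. \<beta> j k \<le> \<delta> k) \<and> \<beta> j \<in> expv n \<and> c j \<in> R \<and> f j (gam \<beta> \<delta> j) \<in> R"
        using Jp_props J_def by simp
      define \<delta>' where "\<delta>' = (\<lambda>k. Max ((\<lambda>j. \<beta> j k) ` J))"
      have XJ: "XJ \<iota> \<beta> J = Some (i, \<delta>')" unfolding \<delta>'_def by (rule XJ_eq[OF Jne]) (use Jp in auto)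
      have le2: "\<delta>' k \<le> \<delta> k" for k unfolding \<delta>'_def using finJ Jne Jp by auto
      have sat: "saturated t \<iota> \<beta> J"
        unfolding saturated_def
      proof (intro allI impI)
        fix j X assume j: "j < t" and X: "XJ \<iota> \<beta> J = Some X" and md: "mdvd (\<iota> j, \<beta> j) X"
        have "X = (i, \<delta>')" using X XJ by simp
        then have "\<iota> j = i" "\<forall>l. \<beta> j l \<le> \<delta>' l" using md by (auto simp: mdvd_def)
        then show "j \<in> J" using j le2 unfolding J_def Jp_def by (auto intro: order.trans)
      qed
      have good: "good J i \<delta>'" unfolding good_def using JT Jne sat XJ by simp
      have gf: "\<forall>j\<in>J. \<iota> j = i \<and> (\<forall>k. \<beta> j k \<le> \<delta>' k) \<and> \<beta> j \<in> expv n \<and> c j \<in> R" "\<delta>' \<in> expv n"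
        using good_facts[OF good] by auto
      have hBJ: "finite (B J)" "B J \<subseteq> syzR R x n c \<beta> \<delta>' J" "vspan R (B J) = syzR R x n c \<beta> \<delta>' J"
        using hB good unfolding good_def by blast+
      have dX: "\<delta> \<in> expv n" using dD DX by auto
      define \<theta> where "\<theta> = (\<lambda>k. \<delta> k - \<delta>' k)"
      have thX: "\<theta> \<in> expv n" using dX by (auto simp: \<theta>_def expv_def)
      have tplus: "(\<lambda>k. \<theta> k + \<delta>' k) = \<delta>" using le2 by (auto simp: \<theta>_def fun_eq_iff)
      have gplus: "(\<lambda>k. \<theta> k + gam \<beta> \<delta>' j k) = gam \<beta> \<delta> j" if "j \<in> J" for j
        using gf(1) that le2 by (auto simp: \<theta>_def gam_def fun_eq_iff intro: order.trans)
      define cp where "cp j = cpair R x n \<theta> (gam \<beta> \<delta>' j)" for j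
      have cpu: "unitR R (cp j)" for j unfolding cp_def using cpair[OF thX gam_expv[OF gf(2)]] by blast
      define ci where "ci j = (SOME v. v \<in> R \<and> cp j * v = 1 \<and> v * cp j = 1)" for j
      have ci: "ci j \<in> R \<and> cp j * ci j = 1 \<and> ci j * cp j = 1" for j
      proof -
        have "\<exists>v. v \<in> R \<and> cp j * v = 1 \<and> v * cp j = 1" using cpu[of j] unfolding unitR_def by blast
        then show ?thesis unfolding ci_def by (rule someI_ex)
      qed
      have sbij: "bij_betw (sig_pow R x n \<theta>) R R" by (rule sigpow_bij)
      have surj: "sig_pow R x n \<theta> ` R = R" using sbij by (simp add: bij_betw_def)
      define b' where "b' j = (if j \<in> J then inv_into R (sig_pow R x n \<theta>) (f j (gam \<beta> \<delta> j) * ci j) else 0)" for j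
      have sb: "b' j \<in> R \<and> sig_pow R x n \<theta> (b' j) = f j (gam \<beta> \<delta> j) * ci j" if "j \<in> J" for j
      proof -
        have "f j (gam \<beta> \<delta> j) * ci j \<in> R" using Jp that ci Rmul by blast
        then have "f j (gam \<beta> \<delta> j) * ci j \<in> sig_pow R x n \<theta> ` R" using surj by simp
        then show ?thesis unfolding b'_def using that by (simp add: inv_into_into f_inv_into_f)
      qed
      have b'R: "b' j \<in> R" for j using sb by (cases "j \<in> J") (auto simp: b'_def)
      have mth: "mon x n \<theta> * (b' j * mon x n (gam \<beta> \<delta>' j)) = f j (gam \<beta> \<delta> j) * mon x n (gam \<beta> \<delta> j)" if "j \<in> J" for j
      proof -
        have "mon x n \<theta> * (b' j * mon x n (gam \<beta> \<delta>' j)) = (mon x n \<theta> * b' j) * mon x n (gam \<beta> \<delta>' j)"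
          by (simp add: mult.assoc)
        also have "\<dots> = sig_pow R x n \<theta> (b' j) * (mon x n \<theta> * mon x n (gam \<beta> \<delta>' j))"
          using mon_R[OF b'R[of j]] by (simp add: mult.assoc)
        also have "\<dots> = (f j (gam \<beta> \<delta> j) * (ci j * cp j)) * mon x n (gam \<beta> \<delta> j)"
          using cpair[OF thX gam_expv[OF gf(2)], of \<beta> j] sb[OF that] gplus[OF that]
          by (simp add: cp_def mult.assoc)
        also have "\<dots> = f j (gam \<beta> \<delta> j) * mon x n (gam \<beta> \<delta> j)" using ci by simp
        finally show ?thesis .
      qed
      have compeq: "comp i \<delta> = (\<lambda>j. mon x n \<theta> * sJ x n \<beta> \<delta>' J b' j)"
        unfolding cJ by (rule ext) (simp add: sJ_def mth)
      define s' where "s' = (\<Sum>j\<in>J. b' j * (sig_pow R x n (gam \<beta> \<delta>' j) (c j) * cpair R x n (gam \<beta> \<delta>' j) (\<beta> j)))"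
      have s'R: "s' \<in> R" unfolding s'_def using finJ gf b'R
        by (intro Rsum) (auto intro!: Rmul sigpow_R cpair_R gam_expv)
      have r1: "rowsum x n t c \<iota> \<beta> (sJ x n \<beta> \<delta>' J b') i = s' * mon x n \<delta>'"
        unfolding s'_def using rowsum_sJ[OF JT, where i=i and \<delta>=\<delta>' and b=b' and k=i] gf b'R by simp
      have "0 = s i \<delta> * mon x n \<delta>" using szero[OF iI dD] by simp
      also have "\<dots> = rowsum x n t c \<iota> \<beta> (comp i \<delta>) i" using rs[OF dX] by simp
      also have "\<dots> = mon x n \<theta> * (s' * mon x n \<delta>')" unfolding compeq rowsum_single r1 ..
      also have "\<dots> = sig_pow R x n \<theta> s' * (mon x n \<theta> * mon x n \<delta>')"
        using mon_R[OF s'R, of \<theta>] by (simp add: mult.assoc[symmetric])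
      also have "\<dots> = (sig_pow R x n \<theta> s' * cpair R x n \<theta> \<delta>') * mon x n \<delta>"
        using cpair[OF thX gf(2)] tplus by (simp add: mult.assoc)
      finally have "(sig_pow R x n \<theta> s' * cpair R x n \<theta> \<delta>') * mon x n \<delta> = 0 * mon x n \<delta>" by simp
      moreover have "sig_pow R x n \<theta> s' * cpair R x n \<theta> \<delta>' \<in> R"
        using Rmul[OF sigpow_R[OF s'R] cpair_R[OF thX gf(2)]] .
      ultimately have "sig_pow R x n \<theta> s' * cpair R x n \<theta> \<delta>' = 0"
        using term_cancel[OF dX _ R0] by blast
      moreover obtain w where "w \<in> R" "cpair R x n \<theta> \<delta>' * w = 1"
        using cpair[OF thX gf(2)] unfolding unitR_def by blast
      ultimately have "sig_pow R x n \<theta> s' = sig_pow R x n \<theta> 0"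
      proof -
        assume a1: "sig_pow R x n \<theta> s' * cpair R x n \<theta> \<delta>' = 0"
        have "sig_pow R x n \<theta> s' = sig_pow R x n \<theta> s' * (cpair R x n \<theta> \<delta>' * w)" using \<open>cpair R x n \<theta> \<delta>' * w = 1\<close> by simp
        also have "\<dots> = 0" using a1 by (simp add: mult.assoc[symmetric])
        finally show ?thesis by (simp add: sigpow_zero)
      qed
      then have s'0: "s' = 0" using sbij s'R R0 unfolding bij_betw_def inj_on_def by blast
      have "b' \<in> syzR R x n c \<beta> \<delta>' J"
        unfolding syzR_def
      proof (intro CollectI conjI)
        show "\<forall>j\<in>J. b' j \<in> R" using b'R by blast
        show "\<forall>j. j \<notin> J \<longrightarrow> b' j = 0" by (simp add: b'_def)
        show "(\<Sum>j\<in>J. b' j * (sig_pow R x n (gam \<beta> \<delta>' j) (c j) * cpair R x n (gam \<beta> \<delta>' j) (\<beta> j))) = 0"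
          using s'0 by (simp add: s'_def)
      qed
      then have "b' \<in> vspan R (B J)" using hBJ(3) by simp
      then obtain F a where F: "finite F" "F \<subseteq> B J" "\<forall>v\<in>F. a v \<in> R" "b' = (\<lambda>j. \<Sum>v\<in>F. a v * v j)"
        unfolding vspan_def by blast
      have sJlin: "sJ x n \<beta> \<delta>' J b' = (\<lambda>j. \<Sum>v\<in>F. a v * sJ x n \<beta> \<delta>' J v j)"
        by (rule ext) (simp add: sJ_def F(4) sum_distrib_right mult.assoc)
      have "comp i \<delta> = (\<lambda>j. \<Sum>v\<in>F. (mon x n \<theta> * a v) * sJ x n \<beta> \<delta>' J v j)"
        unfolding compeq sJlin by (simp add: sum_distrib_left mult.assoc)
      also have "\<dots> \<in> vspan UNIV SS"
      proof (rule vspan_UNIV_closed[OF F(1)], rule ballI)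
        fix v assume "v \<in> F"
        then have "sJ x n \<beta> \<delta>' J v \<in> SS" using SS_mem[OF good] F(2) by blast
        then show "(\<lambda>j. (mon x n \<theta> * a v) * sJ x n \<beta> \<delta>' J v j) \<in> vspan UNIV SS"
          by (rule vspan_single) simp
      qed
      finally show ?thesis .
    qed
  qed
  have "(\<lambda>j. \<Sum>p\<in>I \<times> D. comp (fst p) (snd p) j) \<in> vspan UNIV SS"
    by (rule vspan_UNIV_closed) (use finI finD compB in auto)
  then show ?thesis using hA by simp
qed

end

theorem lemma38:
  fixes R :: "'a::ring_1 set" and x :: "nat \<Rightarrow> 'a" and n m t :: nat
    and c :: "nat \<Rightarrow> 'a" and \<iota> :: "nat \<Rightarrow> nat" and \<beta> :: "nat \<Rightarrow> nat \<Rightarrow> nat"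
    and B :: "nat set \<Rightarrow> (nat \<Rightarrow> 'a) set"
  assumes "sigma_PBW R x n" and "quasi_commutative R x n" and "bijective_ext R x n"
    and "left_noetherian R"
    and "\<forall>j<t. c j \<in> R \<and> c j \<noteq> 0"
    and "\<forall>j<t. \<iota> j < m \<and> \<beta> j \<in> expv n"
    and "\<forall>J i \<delta>. J \<subseteq> {..<t} \<and> J \<noteq> {} \<and> saturated t \<iota> \<beta> J \<and> XJ \<iota> \<beta> J = Some (i, \<delta>) \<longrightarrow>
           finite (B J) \<and> B J \<subseteq> syzR R x n c \<beta> \<delta> J \<and> vspan R (B J) = syzR R x n c \<beta> \<delta> J"
  shows "(\<forall>J i \<delta> b. J \<subseteq> {..<t} \<and> J \<noteq> {} \<and> saturated t \<iota> \<beta> J \<and> XJ \<iota> \<beta> J = Some (i, \<delta>)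
            \<and> b \<in> B J \<longrightarrow>
            sJ x n \<beta> \<delta> J b \<in> syzL x n m t c \<iota> \<beta> \<and> homog R x n t \<iota> \<beta> (sJ x n \<beta> \<delta> J b) (i, \<delta>))
       \<and> syzL x n m t c \<iota> \<beta> = vspan UNIV
            {sJ x n \<beta> \<delta> J b | J i \<delta> b. J \<subseteq> {..<t} \<and> J \<noteq> {} \<and> saturated t \<iota> \<beta> J
                 \<and> XJ \<iota> \<beta> J = Some (i, \<delta>) \<and> b \<in> B J}"
proof -
  interpret L: lset R x n m t c \<iota> \<beta> B
    using assms by (unfold_locales) auto
  have 1: "\<forall>J i \<delta> b. J \<subseteq> {..<t} \<and> J \<noteq> {} \<and> saturated t \<iota> \<beta> J \<and> XJ \<iota> \<beta> J = Some (i, \<delta>)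
            \<and> b \<in> B J \<longrightarrow>
            sJ x n \<beta> \<delta> J b \<in> syzL x n m t c \<iota> \<beta> \<and> homog R x n t \<iota> \<beta> (sJ x n \<beta> \<delta> J b) (i, \<delta>)"
  proof (intro allI impI)
    fix J i \<delta> b assume a: "J \<subseteq> {..<t} \<and> J \<noteq> {} \<and> saturated t \<iota> \<beta> J \<and> XJ \<iota> \<beta> J = Some (i, \<delta>) \<and> b \<in> B J"
    then have "L.good J i \<delta>" by (simp add: L.good_def)
    then show "sJ x n \<beta> \<delta> J b \<in> syzL x n m t c \<iota> \<beta> \<and> homog R x n t \<iota> \<beta> (sJ x n \<beta> \<delta> J b) (i, \<delta>)"
      using L.part1 a by blast
  qed
  have 2: "syzL x n m t c \<iota> \<beta> = vspan UNIV L.SS"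
    using L.part2a L.part2b by blast
  show ?thesis using 1 2 by blast
qed

end
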